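(* For every integer $N\ge 12$, there exists an equal norm tight integer frame with $2N$ elements in $\mathcal{H}_5$.
   Context: $\mathcal{H}_M$ is the real $M$-dimensional Hilbert space, identified with $\mathbb{R}^M$ via a fixed orthonormal basis. An equal norm tight integer frame (ENTIF) with $N$ elements in $\mathcal{H}_M$ is an $M\times N$ integer matrix $A$ of rank $M$ with $AA^T=\lambda I_M$ for some $\lambda>0$ and all columns of the same Euclidean norm. *)

theory Defs
  imports Complex_Main
begin

text \<open>An M x N integer matrix is represented as a function A :: nat => nat => int,
  with A i j the entry in row i < M, column j < N (entries outside are irrelevant).\<close>

definition full_row_rank :: "nat \<Rightarrow> nat \<Rightarrow> (nat \<Rightarrow> nat \<Rightarrow> int) \<Rightarrow> bool" where
  "full_row_rank M N A \<longleftrightarrow>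
     (\<forall>c :: nat \<Rightarrow> real. (\<forall>j<N. (\<Sum>i<M. c i * real_of_int (A i j)) = 0) \<longrightarrow> (\<forall>i<M. c i = 0))"

definition is_ENTIF :: "nat \<Rightarrow> nat \<Rightarrow> (nat \<Rightarrow> nat \<Rightarrow> int) \<Rightarrow> bool" where
  "is_ENTIF M N A \<longleftrightarrow>
     full_row_rank M N A \<and>
     (\<exists>lam::real. lam > 0 \<and>
        (\<forall>i<M. \<forall>k<M. real_of_int (\<Sum>j<N. A i j * A k j) = (if i = k then lam else 0))) \<and>
     (\<forall>j<N. \<forall>j'<N. (\<Sum>i<M. (A i j)^2) = (\<Sum>i<M. (A i j')^2))"

end

theory Submission
  imports Defs
begin

definition B8L :: "int list list" where
 "B8L = [[0, 0, 0, 1, -2], [0, 0, 0, 1, 2], [0, 0, 2, -1, 0], [0, 0, 2, 1, 0], [0, 2, 0, -1, 0], [0, 2, 0, 1, 0], [2, 0, 0, -1, 0], [2, 0, 0, 1, 0]]"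
definition B10L :: "int list list" where
 "B10L = [[0, 0, 0, 1, -2], [0, 0, 0, 1, -2], [0, 0, 0, 2, 1], [0, 0, 0, 2, 1], [0, 1, -2, 0, 0], [0, 1, 2, 0, 0], [1, -2, 0, 0, 0], [1, 2, 0, 0, 0], [2, 0, -1, 0, 0], [2, 0, 1, 0, 0]]"

definition B8 :: "nat \<Rightarrow> nat \<Rightarrow> int" where "B8 i j = B8L ! j ! i"
definition B10 :: "nat \<Rightarrow> nat \<Rightarrow> int" where "B10 i j = B10L ! j ! i"

lemma less5: "(i::nat) < 5 \<longleftrightarrow> i = 0 \<or> i = 1 \<or> i = 2 \<or> i = 3 \<or> i = 4" by auto

lemma G8: "i < 5 \<Longrightarrow> k < 5 \<Longrightarrow> (\<Sum>j<8. B8 i j * B8 k j) = (if i = k then 8 else 0)"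
  unfolding less5 by (auto simp: B8_def B8L_def numeral_eq_Suc lessThan_Suc)

lemma G10: "i < 5 \<Longrightarrow> k < 5 \<Longrightarrow> (\<Sum>j<10. B10 i j * B10 k j) = (if i = k then 10 else 0)"
  unfolding less5 by (auto simp: B10_def B10L_def numeral_eq_Suc lessThan_Suc)

lemma C8: "j < 8 \<Longrightarrow> (\<Sum>i<5. (B8 i j)^2) = 5"
proof -
  assume "j < 8"
  then have "j \<in> {0,1,2,3,4,5,6,7}" by auto
  then show ?thesis by (auto simp: B8_def B8L_def numeral_eq_Suc lessThan_Suc)
qed

lemma C10: "j < 10 \<Longrightarrow> (\<Sum>i<5. (B10 i j)^2) = 5"
proof -
  assume "j < 10"
  then have "j \<in> {0,1,2,3,4,5,6,7,8,9}" by auto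
  then show ?thesis by (auto simp: B10_def B10L_def numeral_eq_Suc lessThan_Suc)
qed

lemma sum_split: "(\<Sum>j<a+(b::nat). f j) = (\<Sum>j<a. f j) + (\<Sum>j<b. f (a+j))"
  by (induction b arbitrary: f) (simp_all add: add.assoc)

lemma sum_rep: "(\<Sum>j<k*m. f (j mod m)) = of_nat k * (\<Sum>j<m. (f j :: 'a::comm_semiring_1))"
proof (induction k)
  case 0 then show ?case by simp
next
  case (Suc k)
  have "(\<Sum>j<Suc k*m. f (j mod m)) = (\<Sum>j<k*m. f (j mod m)) + (\<Sum>j<m. f ((k*m+j) mod m))"
    using sum_split[of "\<lambda>j. f (j mod m)" "k*m" m] by (simp add: add.commute)
  also have "(\<Sum>j<m. f ((k*m+j) mod m)) = (\<Sum>j<m. f j)"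
    by (rule sum.cong) auto
  finally show ?case using Suc by (simp add: algebra_simps)
qed

definition AA :: "nat \<Rightarrow> nat \<Rightarrow> nat \<Rightarrow> int" where
  "AA a i j = (if j < 8*a then B8 i (j mod 8) else B10 i ((j - 8*a) mod 10))"

lemma gram:
  assumes "i < 5" "k < 5"
  shows "(\<Sum>j<8*a+10*b. AA a i j * AA a k j) = (if i = k then int (8*a+10*b) else 0)"
proof -
  have "(\<Sum>j<8*a+10*b. AA a i j * AA a k j)
      = (\<Sum>j<8*a. AA a i j * AA a k j) + (\<Sum>j<10*b. AA a i (8*a+j) * AA a k (8*a+j))"
    by (rule sum_split)
  also have "(\<Sum>j<8*a. AA a i j * AA a k j) = (\<Sum>j<a*8. (\<lambda>t. B8 i t * B8 k t) (j mod 8))"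
    by (rule sum.cong) (auto simp: AA_def)
  also have "\<dots> = int a * (\<Sum>j<8. B8 i j * B8 k j)" by (rule sum_rep)
  also have "(\<Sum>j<10*b. AA a i (8*a+j) * AA a k (8*a+j)) = (\<Sum>j<b*10. (\<lambda>t. B10 i t * B10 k t) (j mod 10))"
    by (rule sum.cong) (auto simp: AA_def)
  also have "\<dots> = int b * (\<Sum>j<10. B10 i j * B10 k j)" by (rule sum_rep)
  finally show ?thesis using G8[OF assms] G10[OF assms] by auto
qed

lemma colnorm: "(\<Sum>i<5. (AA a i j)^2) = 5"
  unfolding AA_def by (cases "j < 8*a") (simp_all add: C8 C10)

theorem corollary6p8:
  fixes N :: nat
  assumes "N \<ge> 12"
  shows "\<exists>A. is_ENTIF 5 (2 * N) A"
proof -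
  define a where "a = N div 4 - N mod 4"
  define b where "b = N mod 4"
  have d: "N = 4 * (N div 4) + N mod 4" by simp
  have "N mod 4 < 4" by simp
  then have "N mod 4 \<le> N div 4" using assms by linarith
  then have Nab: "2 * N = 8*a + 10*b" unfolding a_def b_def using d by linarith
  define lam :: real where "lam = real (8*a+10*b)"
  have lam0: "lam > 0" using assms Nab unfolding lam_def by linarith
  have G: "\<forall>i<5. \<forall>k<5. real_of_int (\<Sum>j<2*N. AA a i j * AA a k j) = (if i = k then lam else 0)"
    using gram unfolding Nab lam_def by simp
  have R: "full_row_rank 5 (2*N) (AA a)"
    unfolding full_row_rank_def
  proof (intro allI impI)
    fix c :: "nat \<Rightarrow> real" and k :: nat
    assume h: "\<forall>j<2*N. (\<Sum>i<5. c i * real_of_int (AA a i j)) = 0" and k: "k < 5"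
    have "0 = (\<Sum>j<2*N. (\<Sum>i<5. c i * real_of_int (AA a i j)) * real_of_int (AA a k j))"
      using h by simp
    also have "\<dots> = (\<Sum>i<5. c i * real_of_int (\<Sum>j<2*N. AA a i j * AA a k j))"
      by (simp add: sum_distrib_left sum_distrib_right sum.swap[of _ "{..<5}"] mult.assoc)
    also have "\<dots> = (\<Sum>i<5. c i * (if i = k then lam else 0))"
      using G k by (intro sum.cong) auto
    also have "\<dots> = c k * lam" using k by (simp add: if_distrib cong: if_cong)
    finally show "c k = 0" using lam0 by simp
  qed
  have "is_ENTIF 5 (2*N) (AA a)"
    unfolding is_ENTIF_def using R G lam0 by (simp add: colnorm) blast
  then show ?thesis by blast
qed

end
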